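(* The iterated symmetric derivatives $\mathbf D_1,\mathbf D_2,\dots$, viewed as commuting linear operators on $\Lambda$, are algebraically independent over $\mathbb C$. That is, for every $r\ge1$ and every nonzero polynomial $P\in\mathbb C[T_1,\dots,T_r]$, the operator $P(\mathbf D_1,\dots,\mathbf D_r)$ is nonzero.
   Context: $\Lambda$ is the algebra of complex symmetric functions in $y_1,y_2,\dots$, with basis the monomial symmetric functions $m_\lambda$. For $i\ge1$, $\mathbf D_i$ is the linear operator with $\mathbf D_im_\lambda=i!\,m_{\lambda\setminus i}$ if $i$ is a part of $\lambda$ (one part $i$ removed), and $\mathbf D_im_\lambda=0$ otherwise. *)

theory Defs
  imports Complex_Main "HOL-Library.Multiset" "HOL-Library.Poly_Mapping"
begin

text \<open>Partitions are finite multisets of positive integers (the parts).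
An element of Lambda is identified with its coefficient function in the
monomial basis: f mu is the coefficient of m_mu.\<close>

type_synonym symfun = "nat multiset \<Rightarrow> complex"

definition is_partition :: "nat multiset \<Rightarrow> bool" where
  "is_partition lam \<longleftrightarrow> 0 \<notin># lam"

definition Lambda :: "symfun set" where
  "Lambda = {f. finite {lam. f lam \<noteq> 0} \<and> (\<forall>lam. f lam \<noteq> 0 \<longrightarrow> is_partition lam)}"

definition monomial_sym :: "nat multiset \<Rightarrow> symfun" where
  "monomial_sym lam = (\<lambda>mu. if mu = lam then 1 else 0)"

definition D :: "nat \<Rightarrow> symfun \<Rightarrow> symfun" where
  "D i f = (\<lambda>mu. \<Sum>lam\<in>{lam. f lam \<noteq> 0}.
      f lam * (if i \<in># lam then fact i * monomial_sym (lam - {#i#}) mu else 0))"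

text \<open>Polynomials in T_1..T_r: finitely supported maps from exponent vectors
(alpha, alpha i = exponent of T_i) to coefficients.
Applying the monomial T_1^a1 ... T_r^ar to D_1..D_r.\<close>
definition apply_monomial :: "nat \<Rightarrow> (nat \<Rightarrow>\<^sub>0 nat) \<Rightarrow> symfun \<Rightarrow> symfun" where
  "apply_monomial r alpha f = foldr (\<lambda>i g. (D i ^^ Poly_Mapping.lookup alpha i) g) [1..<Suc r] f"

definition eval_poly_D :: "nat \<Rightarrow> ((nat \<Rightarrow>\<^sub>0 nat) \<Rightarrow>\<^sub>0 complex) \<Rightarrow> symfun \<Rightarrow> symfun" where
  "eval_poly_D r P f = (\<lambda>mu. \<Sum>alpha\<in>Poly_Mapping.keys P. Poly_Mapping.lookup P alpha * apply_monomial r alpha f mu)"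

end

theory Submission
  imports Defs
begin

lemma D_smul:
  "D i (\<lambda>mu. c * monomial_sym lam mu) =
   (\<lambda>mu. (if i \<in># lam then c * fact i else 0) * monomial_sym (lam - {#i#}) mu)"
proof (cases "c = 0")
  case True
  then show ?thesis by (simp add: D_def)
next
  case False
  have "{lam'. c * monomial_sym lam lam' \<noteq> 0} = {lam}"
    using False by (auto simp: monomial_sym_def split: if_splits)
  then show ?thesis by (auto simp add: D_def monomial_sym_def fun_eq_iff)
qed

lemma D_pow:
  "(D i ^^ k) (\<lambda>mu. c * monomial_sym lam mu) =
   (\<lambda>mu. (if k \<le> count lam i then c * fact i ^ k else 0) * monomial_sym (lam - replicate_mset k i) mu)"
proof (induction k)
  case 0
  then show ?case by simp
next
  case (Suc k)
  have e1: "lam - replicate_mset k i - {#i#} = lam - replicate_mset (Suc k) i"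
    by (simp add: multiset_eq_iff)
  have e2: "(i \<in># lam - replicate_mset k i) = (k < count lam i)"
    by (simp add: in_diff_count)
  have e3: "(if k < count lam i then (if k \<le> count lam i then c * fact i ^ k else 0) * fact i else 0)
      = (if Suc k \<le> count lam i then c * fact i ^ Suc k else (0::complex))"
    by (auto simp: mult_ac)
  show ?case
    apply (simp only: funpow.simps comp_apply Suc.IH)
    apply (subst D_smul)
    apply (simp only: e1 e2 if_distrib[of "\<lambda>x. x * fact i"] e3)
    apply (simp add: mult_ac)
    done
qed

definition MM :: "(nat \<Rightarrow> nat) \<Rightarrow> nat list \<Rightarrow> nat multiset" where
  "MM a xs = sum_list (map (\<lambda>i. replicate_mset (a i) i) xs)"

lemma foldr_D:
  "foldr (\<lambda>i g. (D i ^^ a i) g) xs (\<lambda>mu. c * monomial_sym lam mu) =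
   (\<lambda>mu. (if MM a xs \<subseteq># lam then c * prod_list (map (\<lambda>i. fact i ^ a i) xs) else 0)
        * monomial_sym (lam - MM a xs) mu)"
proof (induction xs)
  case Nil
  then show ?case by (simp add: MM_def)
next
  case (Cons x xs)
  let ?M = "MM a xs"
  have e1: "lam - ?M - replicate_mset (a x) x = lam - MM a (x # xs)"
    by (simp add: MM_def multiset_eq_iff)
  have e2: "(?M \<subseteq># lam \<and> a x \<le> count (lam - ?M) x) = (MM a (x # xs) \<subseteq># lam)"
  proof
    assume h: "?M \<subseteq># lam \<and> a x \<le> count (lam - ?M) x"
    show "MM a (x # xs) \<subseteq># lam"
      unfolding subseteq_mset_def
    proof
      fix j
      have "count ?M j \<le> count lam j" using h by (simp add: subseteq_mset_def)
      then show "count (MM a (x # xs)) j \<le> count lam j"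
        using h by (auto simp: MM_def)
    qed
  next
    assume h: "MM a (x # xs) \<subseteq># lam"
    have "count (MM a (x # xs)) j \<le> count lam j" for j
      using h by (simp add: subseteq_mset_def)
    hence c: "count (replicate_mset (a x) x) j + count ?M j \<le> count lam j" for j
      by (simp add: MM_def)
    have "?M \<subseteq># lam" unfolding subseteq_mset_def
      using c by (metis le_add2 le_trans)
    moreover have "a x \<le> count (lam - ?M) x" using c[of x] by simp
    ultimately show "?M \<subseteq># lam \<and> a x \<le> count (lam - ?M) x" by blast
  qed
  have e3: "(if a x \<le> count (lam - ?M) x then
        (if ?M \<subseteq># lam then c * prod_list (map (\<lambda>i. fact i ^ a i) xs) else 0) * fact x ^ a x else 0)
     = (if MM a (x # xs) \<subseteq># lam then c * prod_list (map (\<lambda>i. fact i ^ a i) (x # xs)) else (0::complex))"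
    using e2 by (auto simp: mult_ac)
  show ?case
    apply (simp only: foldr.simps comp_apply Cons.IH)
    apply (subst D_pow)
    apply (simp only: e1 e3)
    done
qed

lemma count_MM:
  "distinct xs \<Longrightarrow> count (MM a xs) j = (if j \<in> set xs then a j else 0)"
  by (induction xs) (auto simp: MM_def)

theorem mainTheorem8:
  fixes r :: nat and P :: "(nat \<Rightarrow>\<^sub>0 nat) \<Rightarrow>\<^sub>0 complex"
  assumes "r \<ge> 1"
    and "P \<noteq> 0"
    and "\<forall>alpha\<in>Poly_Mapping.keys P. Poly_Mapping.keys alpha \<subseteq> {1..r}"
  shows "\<exists>f\<in>Lambda. eval_poly_D r P f \<noteq> (\<lambda>_. 0)"
proof -
  obtain a0 where a0: "a0 \<in> Poly_Mapping.keys P" using assms(2)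
    by (metis all_not_in_conv keys_eq_empty)
  define xs where "xs = [1..<Suc r]"
  have dxs: "distinct xs" by (simp add: xs_def)
  define lam0 where "lam0 = MM (Poly_Mapping.lookup a0) xs"
  define f where "f = monomial_sym lam0"
  have f1: "f = (\<lambda>mu. 1 * monomial_sym lam0 mu)" by (simp add: f_def)
  have "0 \<notin># lam0"
    using count_MM[OF dxs, of "Poly_Mapping.lookup a0" 0]
    by (simp add: lam0_def xs_def count_eq_zero_iff[symmetric])
  hence fL: "f \<in> Lambda"
    unfolding Lambda_def f_def is_partition_def monomial_sym_def
    by (auto simp: finite_subset[of _ "{lam0}"] split: if_splits)
  have am: "apply_monomial r alpha f {#} =
     (if MM (Poly_Mapping.lookup alpha) xs \<subseteq># lam0
      then prod_list (map (\<lambda>i. fact i ^ Poly_Mapping.lookup alpha i) xs) else 0)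
      * monomial_sym (lam0 - MM (Poly_Mapping.lookup alpha) xs) {#}" for alpha
    unfolding apply_monomial_def f1 xs_def[symmetric] foldr_D by simp
  have z: "apply_monomial r alpha f {#} = 0"
    if "alpha \<in> Poly_Mapping.keys P" "alpha \<noteq> a0" for alpha
  proof (rule ccontr)
    assume "apply_monomial r alpha f {#} \<noteq> 0"
    hence s: "MM (Poly_Mapping.lookup alpha) xs \<subseteq># lam0"
      and e: "lam0 - MM (Poly_Mapping.lookup alpha) xs = {#}"
      unfolding am by (auto simp: monomial_sym_def split: if_splits)
    have "MM (Poly_Mapping.lookup alpha) xs = lam0"
    proof -
      have d: "count lam0 j - count (MM (Poly_Mapping.lookup alpha) xs) j = 0" for j
        using e by (metis count_diff count_empty)
      have "count (MM (Poly_Mapping.lookup alpha) xs) j \<le> count lam0 j" for j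
        using s by (simp add: subseteq_mset_def)
      with d show ?thesis by (simp add: multiset_eq_iff) (meson diff_is_0_eq le_antisym)
    qed
    hence "count (MM (Poly_Mapping.lookup alpha) xs) j = count lam0 j" for j by simp
    hence c: "(if j \<in> set xs then Poly_Mapping.lookup alpha j else 0) =
              (if j \<in> set xs then Poly_Mapping.lookup a0 j else 0)" for j
      unfolding lam0_def count_MM[OF dxs] .
    have "Poly_Mapping.lookup alpha j = Poly_Mapping.lookup a0 j" for j
    proof (cases "j \<in> set xs")
      case True then show ?thesis using c[of j] by simp
    next
      case False
      hence "j \<notin> {1..r}" by (auto simp: xs_def)
      hence "j \<notin> Poly_Mapping.keys alpha" "j \<notin> Poly_Mapping.keys a0"
        using assms(3) that(1) a0 by blast+
      then show ?thesis by (simp add: in_keys_iff)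
    qed
    hence "alpha = a0" by (simp add: poly_mapping_eqI)
    with that show False by simp
  qed
  have nz: "apply_monomial r a0 f {#} \<noteq> 0"
    unfolding am lam0_def by (auto simp add: monomial_sym_def prod_list_zero_iff)
  have "eval_poly_D r P f {#} = Poly_Mapping.lookup P a0 * apply_monomial r a0 f {#}"
    unfolding eval_poly_D_def
    using a0 z by (subst sum.remove[OF finite_keys a0]) (auto intro!: sum.neutral)
  also have "\<dots> \<noteq> 0" using nz a0 by (simp add: in_keys_iff)
  finally show ?thesis using fL by (metis)
qed

end
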